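(* Let $\beta,\eta,\nu>0$, and let $\mathcal Z_1,\mathcal Z_2$ be disjoint Borel sets with $\mathcal Z_1\cup\mathcal Z_2=\mathbb R^d$. Let $g\in\mathcal C(\mathbb R^d)$, $v_1^*\in\mathcal Z_1$, $v_2^*\in\mathcal Z_2$ with $$g(v)-g(v_i^* )\ge(\eta\|v-v_i^*\|_2)^{1/\nu}-\beta\quad\text{for all }v\in\mathcal Z_i,\ i=1,2.$$ For $r>0$ let $g_r:=\max\{\sup_{v\in B_r(v_1^* )}g-g(v_1^* ),\ \sup_{v\in B_r(v_2^* )}g-g(v_2^* )\}$. Let $\rho$ be a probability measure with finite first moment and $v_1^*,v_2^*\in\operatorname{supp}(\rho)$, $\alpha>0$, and $v_\alpha(\rho):=\int we^{-\alpha g(w)}d\rho(w)/\int e^{-\alpha g(w)}d\rho(w)$. Then for every $r>0$ and $q>\beta$ with $\partial B_{q+g_r}(v_1^* )\cap\overline{\mathcal Z_1}\ne\emptyset$ and $\partial B_{q+g_r}(v_2^* )\cap\overline{\mathcal Z_2}\ne\emptyset$, and for $i=1,2$, $$\|v_\alpha(\rho)-v_i^*\|_2\le\|v_1^*-v_2^*\|_2+\frac{2(q+g_r)^\nu}{\eta}+\frac{e^{-\alpha(q-\beta)}}{m_r}\int\|w-v_2^*\|_2d\rho(w)+\|v_1^*-v_2^*\|_2\frac{e^{-\alpha(q-\beta)}}{m_r},$$ where $m_r:=\min_{w\in\{v_1^*,v_2^*\}}\int_{B_r(w)}\phi^\tau_r(u-w)\,d\rho(u)$.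
   Context: $B_r(v)$ is the open Euclidean ball of radius $r$ centered at $v$. For an integer $\tau\ge3$, $\phi^\tau_r(v):=1+(\tau-1)\|v/r\|_2^\tau-\tau\|v/r\|_2^{\tau-1}$ if $\|v\|_2\le r$ and $0$ otherwise (so $\phi^\tau_r\in\mathcal C^1_c(\mathbb R^d,[0,1])$). *)

theory Defs
  imports "HOL-Probability.Probability"
begin

definition phi_bump :: "nat \<Rightarrow> real \<Rightarrow> 'a::euclidean_space \<Rightarrow> real" where
  "phi_bump \<tau> r v = (if norm v \<le> r then
      1 + (real \<tau> - 1) * (norm v / r) ^ \<tau> - real \<tau> * (norm v / r) ^ (\<tau> - 1)
    else 0)"

definition in_support :: "'a::metric_space measure \<Rightarrow> 'a \<Rightarrow> bool" where
  "in_support \<rho> v \<longleftrightarrow> (\<forall>\<epsilon>>0. emeasure \<rho> (ball v \<epsilon>) > 0)"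

definition consensus_point :: "real \<Rightarrow> ('a::euclidean_space \<Rightarrow> real) \<Rightarrow> 'a measure \<Rightarrow> 'a" where
  "consensus_point \<alpha> g \<rho> =
     (1 / (\<integral>w. exp (- \<alpha> * g w) \<partial>\<rho>)) *\<^sub>R (\<integral>w. exp (- \<alpha> * g w) *\<^sub>R w \<partial>\<rho>)"

definition g_r :: "('a::euclidean_space \<Rightarrow> real) \<Rightarrow> 'a \<Rightarrow> 'a \<Rightarrow> real \<Rightarrow> real" where
  "g_r g v1 v2 r = max (Sup (g ` ball v1 r) - g v1) (Sup (g ` ball v2 r) - g v2)"

definition m_r :: "nat \<Rightarrow> 'a::euclidean_space measure \<Rightarrow> 'a \<Rightarrow> 'a \<Rightarrow> real \<Rightarrow> real" where
  "m_r \<tau> \<rho> v1 v2 r = min (\<integral>u\<in>ball v1 r. phi_bump \<tau> r (u - v1) \<partial>\<rho>)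
                            (\<integral>u\<in>ball v2 r. phi_bump \<tau> r (u - v2) \<partial>\<rho>)"

end

theory Submission
  imports Defs
begin

lemma pow_ineq:
  fixes t :: real assumes "0 \<le> t" "t \<le> 1"
  shows "real (Suc n) * t^n \<le> 1 + real n * t^(Suc n)"
proof (induction n)
  case 0 then show ?case by simp
next
  case (Suc n)
  have a: "t + t^(Suc n) \<le> 1 + t^(Suc (Suc n))"
  proof -
    have "t^(Suc n) \<le> 1" using assms by (intro power_le_one) auto
    then have "0 \<le> (1-t)*(1 - t^(Suc n))" using assms by (intro mult_nonneg_nonneg) auto
    then show ?thesis by (simp add: algebra_simps)
  qed
  have "real (Suc (Suc n)) * t^(Suc n) = t * (real (Suc n) * t^n) + t^(Suc n)"
    by (simp add: algebra_simps)
  also have "\<dots> \<le> t * (1 + real n * t^(Suc n)) + t^(Suc n)"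
    using Suc assms by (intro add_right_mono mult_left_mono) auto
  also have "\<dots> = t + real n * t^(Suc (Suc n)) + t^(Suc n)" by (simp add: algebra_simps)
  also have "\<dots> \<le> 1 + real (Suc n) * t^(Suc (Suc n))" using a by (simp add: algebra_simps)
  finally show ?case .
qed

lemma phi_bounds:
  assumes "r > 0" "\<tau> \<ge> 3"
  shows "0 \<le> phi_bump \<tau> r x \<and> phi_bump \<tau> r x \<le> 1"
proof (cases "norm x \<le> r")
  case True
  define t where "t = norm x / r"
  have t0: "0 \<le> t" and t1: "t \<le> 1" using True assms by (auto simp: t_def)
  have ph: "phi_bump \<tau> r x = 1 + (real \<tau> - 1) * t ^ \<tau> - real \<tau> * t ^ (\<tau> - 1)"
    using True by (simp add: phi_bump_def t_def)
  obtain n where n: "\<tau> = Suc n" using assms by (cases \<tau>) auto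
  have "real (Suc n) * t^n \<le> 1 + real n * t^(Suc n)" by (rule pow_ineq[OF t0 t1])
  then have "0 \<le> 1 + (real \<tau> - 1) * t ^ \<tau> - real \<tau> * t ^ (\<tau> - 1)" by (simp add: n)
  then have A: "0 \<le> phi_bump \<tau> r x" using ph by simp
  have "t ^ \<tau> \<le> t ^ (\<tau> - 1)" using t0 t1 by (intro power_decreasing) auto
  moreover have "(real \<tau> - 1) * t ^ \<tau> \<le> real \<tau> * t ^ (\<tau> - 1)"
    using calculation assms t0 by (intro mult_mono) auto
  then have B: "phi_bump \<tau> r x \<le> 1" unfolding ph by simp
  show ?thesis using A B by simp
next
  case False
  then show ?thesis by (simp add: phi_bump_def)
qed

lemma phi_lower:
  assumes "r > 0" "\<tau> \<ge> 3" "norm x < r / real \<tau>"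
  shows "phi_bump \<tau> r x \<ge> 1/2"
proof -
  define t where "t = norm x / r"
  have tau: "real \<tau> \<ge> 3" using assms by simp
  have "r / real \<tau> \<le> r" using assms tau by (simp add: divide_le_eq)
  then have Tr: "norm x \<le> r" using assms by simp
  have t0: "0 \<le> t" using assms by (auto simp: t_def)
  have tlt: "t < 1 / real \<tau>" using assms tau by (simp add: t_def field_simps)
  have "1 / real \<tau> \<le> 1" using tau by simp
  then have t1: "t \<le> 1" using tlt by linarith
  have ph: "phi_bump \<tau> r x = 1 + (real \<tau> - 1) * t ^ \<tau> - real \<tau> * t ^ (\<tau> - 1)"
    using Tr by (simp add: phi_bump_def t_def)
  have "t ^ (\<tau> - 1) \<le> t ^ 2" using t0 t1 assms by (intro power_decreasing) auto
  also have "t^2 \<le> (1/real \<tau>)^2" using t0 tlt by (intro power_mono) auto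
  finally have "real \<tau> * t ^ (\<tau> - 1) \<le> real \<tau> * (1/real \<tau>)^2" using tau by simp
  also have "\<dots> = 1 / real \<tau>" using tau by (simp add: power2_eq_square)
  also have "\<dots> \<le> 1/2" using tau by simp
  finally have X: "real \<tau> * t ^ (\<tau> - 1) \<le> 1/2" .
  have "0 \<le> (real \<tau> - 1) * t ^ \<tau>" using tau t0 by simp
  then show ?thesis unfolding ph using X by linarith
qed

lemma phi_meas:
  "(\<lambda>u. phi_bump \<tau> r (u - v)) \<in> borel_measurable borel"
  unfolding phi_bump_def by measurable


theorem mainTheorem17:
  fixes g :: "'a::euclidean_space \<Rightarrow> real"
    and Z1 Z2 :: "'a set" and v1 v2 :: 'a
    and \<beta> \<eta> \<nu> \<alpha> r q :: real and \<tau> :: nat and \<rho> :: "'a measure"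
  assumes "\<beta> > 0" "\<eta> > 0" "\<nu> > 0"
    and "Z1 \<in> sets borel" "Z2 \<in> sets borel" "Z1 \<inter> Z2 = {}" "Z1 \<union> Z2 = UNIV"
    and "continuous_on UNIV g"
    and "v1 \<in> Z1" "v2 \<in> Z2"
    and "\<forall>v\<in>Z1. g v - g v1 \<ge> (\<eta> * norm (v - v1)) powr (1 / \<nu>) - \<beta>"
    and "\<forall>v\<in>Z2. g v - g v2 \<ge> (\<eta> * norm (v - v2)) powr (1 / \<nu>) - \<beta>"
    and "prob_space \<rho>" "sets \<rho> = sets borel"
    and "integrable \<rho> (\<lambda>w. norm w)"
    and "in_support \<rho> v1" "in_support \<rho> v2"
    and "\<alpha> > 0" and "\<tau> \<ge> 3"
    and "r > 0" "q > \<beta>"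
    and "frontier (ball v1 (q + g_r g v1 v2 r)) \<inter> closure Z1 \<noteq> {}"
    and "frontier (ball v2 (q + g_r g v1 v2 r)) \<inter> closure Z2 \<noteq> {}"
  shows "\<forall>vi\<in>{v1, v2}.
     norm (consensus_point \<alpha> g \<rho> - vi)
       \<le> norm (v1 - v2) + 2 * (q + g_r g v1 v2 r) powr \<nu> / \<eta>
         + exp (- \<alpha> * (q - \<beta>)) / m_r \<tau> \<rho> v1 v2 r * (\<integral>w. norm (w - v2) \<partial>\<rho>)
         + norm (v1 - v2) * (exp (- \<alpha> * (q - \<beta>)) / m_r \<tau> \<rho> v1 v2 r)"
proof -
  note A = assms
  interpret P: prob_space \<rho> by fact
  define gr where "gr = g_r g v1 v2 r"
  define R where "R = (q + gr) powr \<nu> / \<eta>"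
  define D where "D = norm (v1 - v2)"
  define gmin where "gmin = min (g v1) (g v2)"
  define E where "E = (\<lambda>w. exp (- \<alpha> * g w))"
  define e where "e = exp (- \<alpha> * (q - \<beta>))"
  define c where "c = exp (- \<alpha> * (gmin + gr))"
  define K where "K = c * e"
  define m where "m = m_r \<tau> \<rho> v1 v2 r"
  define I where "I = (\<integral>w. norm (w - v2) \<partial>\<rho>)"
  have mc: "\<And>f::'a \<Rightarrow> real. f \<in> borel_measurable borel \<Longrightarrow> f \<in> borel_measurable \<rho>"
    using A(14) measurable_cong_sets by blast
  have mcv: "\<And>f::'a \<Rightarrow> 'a. f \<in> borel_measurable borel \<Longrightarrow> f \<in> borel_measurable \<rho>"
    using A(14) measurable_cong_sets by blast
  have space: "space \<rho> = UNIV" using A(14) sets_eq_imp_space_eq by fastforce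
  have gmeas: "g \<in> borel_measurable borel" using A(8) by (rule borel_measurable_continuous_onI)
  have bdd: "bdd_above (g ` ball v r)" for v
  proof -
    have "compact (g ` cball v r)"
      using A(8) by (intro compact_continuous_image) (auto intro: continuous_on_subset)
    then have "bdd_above (g ` cball v r)" by (intro bounded_imp_bdd_above compact_imp_bounded)
    then show ?thesis by (rule bdd_above_mono) auto
  qed
  have grle1: "g u \<le> g v1 + gr" if "u \<in> ball v1 r" for u
  proof -
    have "g u \<le> Sup (g ` ball v1 r)" using that bdd by (intro cSup_upper) auto
    then show ?thesis unfolding gr_def g_r_def by linarith
  qed
  have grle2: "g u \<le> g v2 + gr" if "u \<in> ball v2 r" for u
  proof -
    have "g u \<le> Sup (g ` ball v2 r)" using that bdd by (intro cSup_upper) auto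
    then show ?thesis unfolding gr_def g_r_def by linarith
  qed
  have gr0: "0 \<le> gr" using grle1[of v1] A(20) by simp
  have qgr: "q + gr > 0" using gr0 A(1,21) by linarith
  have glow: "g w \<ge> gmin - \<beta>" for w
  proof -
    have "w \<in> Z1 \<or> w \<in> Z2" using A(7) by auto
    then show ?thesis
    proof
      assume "w \<in> Z1"
      then have "g w - g v1 \<ge> (\<eta> * norm (w - v1)) powr (1 / \<nu>) - \<beta>" using A(11) by auto
      moreover have "(\<eta> * norm (w - v1)) powr (1 / \<nu>) \<ge> 0" by simp
      ultimately show ?thesis unfolding gmin_def by linarith
    next
      assume "w \<in> Z2"
      then have "g w - g v2 \<ge> (\<eta> * norm (w - v2)) powr (1 / \<nu>) - \<beta>" using A(12) by auto
      moreover have "(\<eta> * norm (w - v2)) powr (1 / \<nu>) \<ge> 0" by simp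
      ultimately show ?thesis unfolding gmin_def by linarith
    qed
  qed
  define C where "C = exp (- \<alpha> * (gmin - \<beta>))"
  have Epos: "0 < E w" for w by (simp add: E_def)
  have Ebd: "E w \<le> C" for w
    unfolding E_def C_def using glow[of w] A(18) by (simp add: mult_left_mono)
  have Emeas: "E \<in> borel_measurable \<rho>" unfolding E_def using gmeas by (intro mc) measurable
  have Eint: "integrable \<rho> E"
    by (rule P.integrable_const_bound[where B=C]) (use Epos Ebd Emeas in \<open>auto simp: less_imp_le\<close>)
  have nint: "integrable \<rho> (\<lambda>w. norm (w - v))" for v
  proof (rule Bochner_Integration.integrable_bound[where f="\<lambda>w. norm w + norm v"])
    show "integrable \<rho> (\<lambda>w. norm w + norm v)" using A(15) by simp
    show "(\<lambda>w. norm (w - v)) \<in> borel_measurable \<rho>" by (intro mc) measurable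
    show "AE w in \<rho>. norm (norm (w - v)) \<le> norm (norm w + norm v)"
      by (auto intro!: AE_I2 norm_triangle_ineq4)
  qed
  have ENint: "integrable \<rho> (\<lambda>w. E w * norm (w - v))" for v
  proof (rule Bochner_Integration.integrable_bound[where f="\<lambda>w. C * norm (w - v)"])
    show "integrable \<rho> (\<lambda>w. C * norm (w - v))" using nint by simp
    show "(\<lambda>w. E w * norm (w - v)) \<in> borel_measurable \<rho>"
      by (rule borel_measurable_times[OF Emeas]) (intro mc, measurable)
    show "AE w in \<rho>. norm (E w * norm (w - v)) \<le> norm (C * norm (w - v))"
      using Epos Ebd by (auto intro!: AE_I2 mult_right_mono simp: less_imp_le abs_mult intro: order_trans[OF _ abs_ge_self])
  qed
  have EVint: "integrable \<rho> (\<lambda>w. E w *\<^sub>R (w - v))" for v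
  proof (rule Bochner_Integration.integrable_bound[where f="\<lambda>w. E w * norm (w - v)"])
    show "integrable \<rho> (\<lambda>w. E w * norm (w - v))" by (rule ENint)
    show "(\<lambda>w. E w *\<^sub>R (w - v)) \<in> borel_measurable \<rho>"
      by (rule borel_measurable_scaleR[OF Emeas]) (intro mcv, measurable)
    show "AE w in \<rho>. norm (E w *\<^sub>R (w - v)) \<le> norm (E w * norm (w - v))"
      using Epos by (auto intro!: AE_I2 simp: less_imp_le abs_mult)
  qed
  have EWint: "integrable \<rho> (\<lambda>w. E w *\<^sub>R w)" using EVint[of 0] by simp
  define Z where "Z = integral\<^sup>L \<rho> E"
  have far: "E w \<le> K" if "R < norm (w - v1)" "R < norm (w - v2)" for w
  proof -
    have key: "g w \<ge> g v + q + gr - \<beta>"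
      if v: "v \<in> {v1, v2}" "R < norm (w - v)" "g w - g v \<ge> (\<eta> * norm (w - v)) powr (1 / \<nu>) - \<beta>" for v
    proof -
      have "(q + gr) powr \<nu> = \<eta> * R" unfolding R_def using A(2) by simp
      also have "\<dots> \<le> \<eta> * norm (w - v)" using v(2) A(2) by simp
      finally have "((q + gr) powr \<nu>) powr (1/\<nu>) \<le> (\<eta> * norm (w - v)) powr (1 / \<nu>)"
        using A(3) by (intro powr_mono2) auto
      moreover have "((q + gr) powr \<nu>) powr (1/\<nu>) = q + gr"
        using A(3) qgr by (simp add: powr_powr)
      ultimately show ?thesis using v(3) by linarith
    qed
    have "w \<in> Z1 \<or> w \<in> Z2" using A(7) by auto
    then have "g w \<ge> gmin + q + gr - \<beta>"
    proof
      assume "w \<in> Z1"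
      then have "g w \<ge> g v1 + q + gr - \<beta>" using key[of v1] that A(11) by auto
      then show ?thesis unfolding gmin_def by linarith
    next
      assume "w \<in> Z2"
      then have "g w \<ge> g v2 + q + gr - \<beta>" using key[of v2] that A(12) by auto
      then show ?thesis unfolding gmin_def by linarith
    qed
    then have "\<alpha> * (gmin + q + gr - \<beta>) \<le> \<alpha> * g w"
      using A(18) by (intro mult_left_mono) auto
    then have "- \<alpha> * g w \<le> - \<alpha> * (gmin + gr) + (- \<alpha> * (q - \<beta>))"
      by (simp add: algebra_simps)
    then show ?thesis unfolding E_def K_def c_def e_def by (simp flip: exp_add)
  qed
  have R0: "0 \<le> R" unfolding R_def using A(2) by simp
  have pw: "E w * norm (w - vi) \<le> E w * (D + R) + K * (norm (w - v2) + D)"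
    if vi: "vi \<in> {v1, v2}" for w vi
  proof (cases "norm (w - v1) \<le> R \<or> norm (w - v2) \<le> R")
    case True
    have "norm (w - vi) \<le> D + R"
    proof -
      have "norm (w - vi) \<le> norm (w - v1) + norm (v1 - vi)" "norm (w - vi) \<le> norm (w - v2) + norm (v2 - vi)"
        using norm_diff_triangle_ineq[of w v1 v1 vi] norm_diff_triangle_ineq[of w v2 v2 vi] by auto
      moreover have "norm (v1 - vi) \<le> D" "norm (v2 - vi) \<le> D" using vi by (auto simp: D_def norm_minus_commute)
      ultimately show ?thesis using True by linarith
    qed
    then have "E w * norm (w - vi) \<le> E w * (D + R)" using Epos[of w] by (simp add: mult_left_mono)
    moreover have "0 \<le> K * (norm (w - v2) + D)" by (simp add: K_def c_def e_def D_def)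
    ultimately show ?thesis by linarith
  next
    case False
    have "norm (w - vi) \<le> norm (w - v2) + norm (v2 - vi)"
      using norm_diff_triangle_ineq[of w v2 v2 vi] by auto
    moreover have "norm (v2 - vi) \<le> D" using vi by (auto simp: D_def norm_minus_commute)
    ultimately have n: "norm (w - vi) \<le> norm (w - v2) + D" by linarith
    have "E w * norm (w - vi) \<le> K * (norm (w - v2) + D)"
      using far[of w] False n Epos[of w] by (intro mult_mono) (auto simp: less_imp_le)
    moreover have "0 \<le> E w * (D + R)" using Epos[of w] R0 by (simp add: D_def)
    ultimately show ?thesis by linarith
  qed
  have phiint: "set_integrable \<rho> (ball v r) (\<lambda>u. phi_bump \<tau> r (u - v))" for v
    unfolding set_integrable_def
  proof (rule P.integrable_const_bound[where B=1])
    show "AE x in \<rho>. norm (indicator (ball v r) x *\<^sub>R phi_bump \<tau> r (x - v)) \<le> (1::real)"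
      using phi_bounds[OF A(20,19)] by (auto intro!: AE_I2 simp: indicator_def abs_le_iff) (smt (verit))
    show "(\<lambda>x. indicator (ball v r) x *\<^sub>R phi_bump \<tau> r (x - v)) \<in> borel_measurable \<rho>"
      by (intro mc borel_measurable_scaleR borel_measurable_indicator phi_meas) simp
  qed
  have setpos: "(\<integral>u\<in>ball v r. phi_bump \<tau> r (u - v) \<partial>\<rho>) > 0" if "in_support \<rho> v" for v
  proof -
    have em: "emeasure \<rho> (ball v (r / real \<tau>)) > 0" using that A(19,20) by (simp add: in_support_def)
    have bs: "ball v (r / real \<tau>) \<in> sets \<rho>" using A(14) by simp
    have mpos: "measure \<rho> (ball v (r / real \<tau>)) > 0"
      using em bs by (simp add: P.emeasure_eq_measure)
    have "(1/2) * measure \<rho> (ball v (r / real \<tau>)) = (\<integral>u. indicator (ball v (r / real \<tau>)) u * (1/2) \<partial>\<rho>)"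
      using bs by simp
    also have "\<dots> \<le> (\<integral>u. indicator (ball v r) u *\<^sub>R phi_bump \<tau> r (u - v) \<partial>\<rho>)"
    proof (rule integral_mono)
      show "integrable \<rho> (\<lambda>u. indicator (ball v (r / real \<tau>)) u * (1/2::real))"
        using bs by (intro integrable_mult_left integrable_real_indicator) (auto simp: P.emeasure_eq_measure)
      show "integrable \<rho> (\<lambda>u. indicator (ball v r) u *\<^sub>R phi_bump \<tau> r (u - v))"
        using phiint[of v] by (simp add: set_integrable_def)
      fix u
      have tau: "real \<tau> \<ge> 3" using A(19) by simp
      have sub: "r / real \<tau> \<le> r" using A(20) tau by (simp add: divide_le_eq)
      show "indicator (ball v (r / real \<tau>)) u * (1/2) \<le> indicator (ball v r) u *\<^sub>R phi_bump \<tau> r (u - v)"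
      proof (cases "u \<in> ball v (r / real \<tau>)")
        case True
        then have "u \<in> ball v r" using sub by auto
        moreover have "phi_bump \<tau> r (u - v) \<ge> 1/2"
          using True A(19,20) by (intro phi_lower) (auto simp: dist_norm norm_minus_commute)
        ultimately show ?thesis using True by simp
      next
        case False
        then show ?thesis using phi_bounds[OF A(20,19), of "u - v"] by (simp add: indicator_def)
      qed
    qed
    finally show ?thesis using mpos unfolding set_lebesgue_integral_def by linarith
  qed
  have m0: "m > 0" unfolding m_def m_r_def using setpos A(16,17) by simp
  obtain vj where vj: "vj \<in> {v1, v2}" "g vj = gmin" unfolding gmin_def by (cases "g v1 \<le> g v2") auto
  have grlej: "g u \<le> gmin + gr" if "u \<in> ball vj r" for u
    using vj that grle1 grle2 by auto
  have mle: "m \<le> (\<integral>u\<in>ball vj r. phi_bump \<tau> r (u - vj) \<partial>\<rho>)" using vj unfolding m_def m_r_def by auto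
  have Zlow: "c * m \<le> Z"
  proof -
    have "c * m \<le> c * (\<integral>u. indicator (ball vj r) u *\<^sub>R phi_bump \<tau> r (u - vj) \<partial>\<rho>)"
      using mle by (simp add: c_def set_lebesgue_integral_def)
    also have "\<dots> = (\<integral>u. c * (indicator (ball vj r) u *\<^sub>R phi_bump \<tau> r (u - vj)) \<partial>\<rho>)" by simp
    also have "\<dots> \<le> Z" unfolding Z_def
    proof (rule integral_mono)
      show "integrable \<rho> (\<lambda>u. c * (indicator (ball vj r) u *\<^sub>R phi_bump \<tau> r (u - vj)))"
        using phiint[of vj] by (simp add: set_integrable_def)
      show "integrable \<rho> E" by (rule Eint)
      fix u
      show "c * (indicator (ball vj r) u *\<^sub>R phi_bump \<tau> r (u - vj)) \<le> E u"
      proof (cases "u \<in> ball vj r")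
        case True
        have "c \<le> E u" unfolding c_def E_def using grlej[OF True] A(18) by (simp add: mult_left_mono)
        moreover have "phi_bump \<tau> r (u - vj) \<le> 1" "0 \<le> c" using phi_bounds[OF A(20,19)] by (auto simp: c_def)
        ultimately have "c * phi_bump \<tau> r (u - vj) \<le> E u"
          by (metis mult.right_neutral mult_left_mono order_trans)
        then show ?thesis using True by simp
      next
        case False
        then show ?thesis using Epos[of u] by (simp add: less_imp_le)
      qed
    qed
    finally show ?thesis .
  qed
  have c0: "c > 0" by (simp add: c_def)
  have "0 < c * m" using c0 m0 by simp
  then have Z0: "Z > 0" using Zlow by linarith
  have KZ: "K / Z \<le> e / m"
  proof -
    have "K / Z \<le> K / (c * m)" using Zlow c0 m0 Z0 by (intro divide_left_mono) (auto simp: K_def e_def)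
    also have "\<dots> = e / m" using c0 by (simp add: K_def)
    finally show ?thesis .
  qed
  have I0: "0 \<le> I" unfolding I_def by simp
  show ?thesis
  proof
    fix vi assume vi: "vi \<in> {v1, v2}"
    have cp: "consensus_point \<alpha> g \<rho> - vi = (1 / Z) *\<^sub>R (\<integral>w. E w *\<^sub>R (w - vi) \<partial>\<rho>)"
    proof -
      have "(\<integral>w. E w *\<^sub>R (w - vi) \<partial>\<rho>) = (\<integral>w. E w *\<^sub>R w \<partial>\<rho>) - (\<integral>w. E w *\<^sub>R vi \<partial>\<rho>)"
        using EWint Eint by (simp add: scaleR_diff_right)
      also have "(\<integral>w. E w *\<^sub>R vi \<partial>\<rho>) = Z *\<^sub>R vi" using Eint by (simp add: Z_def)
      finally have "(\<integral>w. E w *\<^sub>R (w - vi) \<partial>\<rho>) = (\<integral>w. E w *\<^sub>R w \<partial>\<rho>) - Z *\<^sub>R vi" .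
      then show ?thesis using Z0
        by (simp add: consensus_point_def E_def Z_def scaleR_diff_right)
    qed
    have "norm (consensus_point \<alpha> g \<rho> - vi) \<le> (1 / Z) * (\<integral>w. E w * norm (w - vi) \<partial>\<rho>)"
    proof -
      have "norm (\<integral>w. E w *\<^sub>R (w - vi) \<partial>\<rho>) \<le> (\<integral>w. norm (E w *\<^sub>R (w - vi)) \<partial>\<rho>)"
        by (rule integral_norm_bound)
      also have "\<dots> = (\<integral>w. E w * norm (w - vi) \<partial>\<rho>)"
        using Epos by (simp add: less_imp_le)
      finally show ?thesis unfolding cp using Z0 by (simp add: divide_right_mono)
    qed
    also have "(\<integral>w. E w * norm (w - vi) \<partial>\<rho>) \<le> (\<integral>w. E w * (D + R) + K * (norm (w - v2) + D) \<partial>\<rho>)"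
      using ENint nint Eint pw[OF vi] by (intro integral_mono) auto
    also have "(\<integral>w. E w * (D + R) + K * (norm (w - v2) + D) \<partial>\<rho>) = Z * (D + R) + K * (I + D)"
      using ENint nint Eint by (simp add: Z_def I_def P.prob_space)
    finally have "norm (consensus_point \<alpha> g \<rho> - vi) \<le> (1 / Z) * (Z * (D + R) + K * (I + D))"
      using Z0 by (simp add: divide_right_mono less_imp_le)
    also have "\<dots> = D + R + (K / Z) * (I + D)" using Z0 by (simp add: field_simps)
    also have "\<dots> \<le> D + R + (e / m) * (I + D)"
      using KZ I0 by (intro add_left_mono mult_right_mono) (auto simp: D_def)
    also have "\<dots> \<le> D + 2 * (q + gr) powr \<nu> / \<eta> + e / m * I + D * (e / m)"
    proof -
      have "e / m * (I + D) = e / m * I + D * (e / m)" by (simp add: algebra_simps add_divide_distrib)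
      moreover have "R \<le> 2 * (q + gr) powr \<nu> / \<eta>"
        using R0 unfolding R_def by (simp add: divide_right_mono)
      ultimately show ?thesis by linarith
    qed
    finally show "norm (consensus_point \<alpha> g \<rho> - vi)
       \<le> norm (v1 - v2) + 2 * (q + g_r g v1 v2 r) powr \<nu> / \<eta>
         + exp (- \<alpha> * (q - \<beta>)) / m_r \<tau> \<rho> v1 v2 r * (\<integral>w. norm (w - v2) \<partial>\<rho>)
         + norm (v1 - v2) * (exp (- \<alpha> * (q - \<beta>)) / m_r \<tau> \<rho> v1 v2 r)"
      unfolding D_def gr_def e_def m_def I_def .
  qed
qed

end
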